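(* Suppose $x_1,\dots,x_{15}\in\mathbb{H}^3$ satisfy $\langle\Gamma_i,\Gamma_j\rangle=-\frac1{21}$ for all $i\ne j$, where $\Gamma_i := x_ix_i^\dagger-\frac13|x_i|^2I_3$, and suppose additionally that $|x_i|^4\in[1-10^{-6},1+10^{-6}]$ for each $i$. Then $|x_i|=1$ for all $i$ and $\{x_1,\dots,x_{15}\}$ is a tight simplex in $\mathbb{H}\mathbb{P}^2$.
   Context: $\mathbb{H}$ denotes the quaternions; $\dagger$ is conjugate transpose and $\langle x,y\rangle=x^\dagger y$ on $\mathbb{H}^3$. On $3\times 3$ quaternionic Hermitian matrices the inner product is $\langle A,B\rangle=\operatorname{Re}\operatorname{Tr}(AB)$. $\mathbb{H}\mathbb{P}^{2}$ is the space of quaternionic lines in $\mathbb{H}^3$ (scalars acting on the right). A tight simplex of $N$ points in $\mathbb{H}\mathbb{P}^{2}$ is a set of $N$ distinct points represented by unit vectors $x_1,\dots,x_N$ with $|\langle x_i,x_j\rangle|^2=\frac{N-3}{3(N-1)}$ for all $i\ne j$ (for $N=15$ this value is $2/7$). *)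

theory Defs
  imports "HOL-Analysis.Analysis"
begin

datatype quat = Quat (qRe: real) (qIm1: real) (qIm2: real) (qIm3: real)

instantiation quat :: ab_group_add
begin
definition "0 = Quat 0 0 0 0"
definition "p + q = Quat (qRe p + qRe q) (qIm1 p + qIm1 q) (qIm2 p + qIm2 q) (qIm3 p + qIm3 q)"
definition "- q = Quat (- qRe q) (- qIm1 q) (- qIm2 q) (- qIm3 q)"
definition "p - q = Quat (qRe p - qRe q) (qIm1 p - qIm1 q) (qIm2 p - qIm2 q) (qIm3 p - qIm3 q)"
instance
  by standard (auto simp: zero_quat_def plus_quat_def uminus_quat_def minus_quat_def intro: quat.expand)
end

instantiation quat :: times
begin
definition "p * q = Quat
  (qRe p * qRe q - qIm1 p * qIm1 q - qIm2 p * qIm2 q - qIm3 p * qIm3 q)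
  (qRe p * qIm1 q + qIm1 p * qRe q + qIm2 p * qIm3 q - qIm3 p * qIm2 q)
  (qRe p * qIm2 q - qIm1 p * qIm3 q + qIm2 p * qRe q + qIm3 p * qIm1 q)
  (qRe p * qIm3 q + qIm1 p * qIm2 q - qIm2 p * qIm1 q + qIm3 p * qRe q)"
instance ..
end

definition qcnj :: "quat \<Rightarrow> quat" where
  "qcnj q = Quat (qRe q) (- qIm1 q) (- qIm2 q) (- qIm3 q)"

definition qreal :: "real \<Rightarrow> quat" where
  "qreal r = Quat r 0 0 0"

definition qnorm2 :: "quat \<Rightarrow> real" where
  "qnorm2 q = (qRe q)\<^sup>2 + (qIm1 q)\<^sup>2 + (qIm2 q)\<^sup>2 + (qIm3 q)\<^sup>2"

definition hinner :: "quat^3 \<Rightarrow> quat^3 \<Rightarrow> quat" where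
  "hinner x y = (\<Sum>k\<in>UNIV. qcnj (x$k) * y$k)"

definition vnorm2 :: "quat^3 \<Rightarrow> real" where
  "vnorm2 x = (\<Sum>k\<in>UNIV. qnorm2 (x$k))"

definition vnorm :: "quat^3 \<Rightarrow> real" where
  "vnorm x = sqrt (vnorm2 x)"

definition Gamma_mat :: "quat^3 \<Rightarrow> 3 \<Rightarrow> 3 \<Rightarrow> quat" where
  "Gamma_mat x a b = x$a * qcnj (x$b) - (if a = b then qreal (vnorm2 x / 3) else 0)"

definition hmat_inner :: "(3 \<Rightarrow> 3 \<Rightarrow> quat) \<Rightarrow> (3 \<Rightarrow> 3 \<Rightarrow> quat) \<Rightarrow> real" where
  "hmat_inner A B = qRe (\<Sum>a\<in>UNIV. \<Sum>b\<in>UNIV. A a b * B b a)"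

text \<open>The quaternionic line spanned by \<open>x\<close> (scalars act on the right); it is the point
  of \<open>\<bbbH>\<bbbP>\<^sup>2\<close> represented by a nonzero vector \<open>x\<close>.\<close>
definition hline :: "quat^3 \<Rightarrow> (quat^3) set" where
  "hline x = {y. \<exists>q. y = (\<chi> k. x$k * q)}"

definition tight_simplex_HP2 :: "nat \<Rightarrow> (nat \<Rightarrow> quat^3) \<Rightarrow> bool" where
  "tight_simplex_HP2 N x \<longleftrightarrow>
     (\<forall>i<N. vnorm (x i) = 1) \<and>
     (\<forall>i<N. \<forall>j<N. i \<noteq> j \<longrightarrow> hline (x i) \<noteq> hline (x j)) \<and>
     (\<forall>i<N. \<forall>j<N. i \<noteq> j \<longrightarrow>
        qnorm2 (hinner (x i) (x j)) = (real N - 3) / (3 * (real N - 1)))"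

end

theory Submission
  imports Defs
begin

instantiation quat :: ring_1
begin
definition "1 = Quat 1 0 0 0"
instance
  by standard (auto simp: one_quat_def times_quat_def plus_quat_def zero_quat_def
       minus_quat_def uminus_quat_def algebra_simps intro: quat.expand)
end

lemma quat_eq_iff: "p = q \<longleftrightarrow> qRe p = qRe q \<and> qIm1 p = qIm1 q \<and> qIm2 p = qIm2 q \<and> qIm3 p = qIm3 q"
  by (cases p; cases q) auto

lemma quat_comps[simp]:
  "qRe (p + q) = qRe p + qRe q" "qIm1 (p + q) = qIm1 p + qIm1 q" "qIm2 (p + q) = qIm2 p + qIm2 q" "qIm3 (p + q) = qIm3 p + qIm3 q"
  "qRe (p - q) = qRe p - qRe q" "qIm1 (p - q) = qIm1 p - qIm1 q" "qIm2 (p - q) = qIm2 p - qIm2 q" "qIm3 (p - q) = qIm3 p - qIm3 q"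
  "qRe (- q) = - qRe q" "qIm1 (- q) = - qIm1 q" "qIm2 (- q) = - qIm2 q" "qIm3 (- q) = - qIm3 q"
  "qRe 0 = 0" "qIm1 0 = 0" "qIm2 0 = 0" "qIm3 0 = 0"
  "qRe 1 = 1" "qIm1 1 = 0" "qIm2 1 = 0" "qIm3 1 = 0"
  by (simp_all add: plus_quat_def minus_quat_def uminus_quat_def zero_quat_def one_quat_def)

lemma quat_mult_comps[simp]:
  "qRe (p * q) = qRe p * qRe q - qIm1 p * qIm1 q - qIm2 p * qIm2 q - qIm3 p * qIm3 q"
  "qIm1 (p * q) = qRe p * qIm1 q + qIm1 p * qRe q + qIm2 p * qIm3 q - qIm3 p * qIm2 q"
  "qIm2 (p * q) = qRe p * qIm2 q - qIm1 p * qIm3 q + qIm2 p * qRe q + qIm3 p * qIm1 q"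
  "qIm3 (p * q) = qRe p * qIm3 q + qIm1 p * qIm2 q - qIm2 p * qIm1 q + qIm3 p * qRe q"
  by (simp_all add: times_quat_def)

lemma qcnj_comps[simp]: "qRe (qcnj q) = qRe q" "qIm1 (qcnj q) = - qIm1 q" "qIm2 (qcnj q) = - qIm2 q" "qIm3 (qcnj q) = - qIm3 q"
  by (simp_all add: qcnj_def)
lemma qreal_comps[simp]: "qRe (qreal r) = r" "qIm1 (qreal r) = 0" "qIm2 (qreal r) = 0" "qIm3 (qreal r) = 0"
  by (simp_all add: qreal_def)

lemma qRe_sum: "qRe (sum f A) = (\<Sum>a\<in>A. qRe (f a))"
  by (induction A rule: infinite_finite_induct) auto
lemma qRe_comm: "qRe (p * q) = qRe (q * p)" by simp
lemma qcnj_mult: "qcnj (p * q) = qcnj q * qcnj p" by (simp add: quat_eq_iff algebra_simps)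
lemma qcnj_qcnj[simp]: "qcnj (qcnj p) = p" by (simp add: quat_eq_iff)
lemma qcnj_add[simp]: "qcnj (p + q) = qcnj p + qcnj q" by (simp add: quat_eq_iff)
lemma qcnj_diff[simp]: "qcnj (p - q) = qcnj p - qcnj q" by (simp add: quat_eq_iff)
lemma qcnj_sum: "qcnj (sum f A) = (\<Sum>a\<in>A. qcnj (f a))"
  by (induction A rule: infinite_finite_induct) (auto simp: quat_eq_iff)
lemma qreal_mult_comm: "qreal r * p = p * qreal r" by (simp add: quat_eq_iff)
lemma qreal_mult_qreal: "qreal r * qreal s = qreal (r * s)" by (simp add: quat_eq_iff)
lemma qreal_add: "qreal (r + s) = qreal r + qreal s" by (simp add: quat_eq_iff)
lemma qreal_sum: "qreal (sum f A) = (\<Sum>a\<in>A. qreal (f a))"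
  by (induction A rule: infinite_finite_induct) (auto simp: quat_eq_iff)
lemma qcnj_qreal[simp]: "qcnj (qreal r) = qreal r" by (simp add: quat_eq_iff)
lemma qRe_qreal_mult: "qRe (qreal r * p) = r * qRe p" by simp
lemma mult_qcnj_self: "p * qcnj p = qreal (qnorm2 p)" "qcnj p * p = qreal (qnorm2 p)"
  by (simp_all add: quat_eq_iff qnorm2_def power2_eq_square algebra_simps)
lemma qnorm2_nonneg: "qnorm2 p \<ge> 0" by (simp add: qnorm2_def)

type_synonym mat = "3 \<Rightarrow> 3 \<Rightarrow> quat"

definition madd :: "mat \<Rightarrow> mat \<Rightarrow> mat" where "madd A B = (\<lambda>a b. A a b + B a b)"
definition msc :: "real \<Rightarrow> mat \<Rightarrow> mat" where "msc r A = (\<lambda>a b. qreal r * A a b)"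
definition mmul :: "mat \<Rightarrow> mat \<Rightarrow> mat" where "mmul A B = (\<lambda>a b. \<Sum>k\<in>UNIV. A a k * B k b)"
definition Imat :: mat where "Imat = (\<lambda>a b. if a = b then 1 else 0)"
definition mzero :: mat where "mzero = (\<lambda>a b. 0)"
definition outer :: "quat^3 \<Rightarrow> mat" where "outer x = (\<lambda>a b. x$a * qcnj (x$b))"
definition herm :: "mat \<Rightarrow> bool" where "herm A \<longleftrightarrow> (\<forall>a b. A b a = qcnj (A a b))"
definition Jop :: "mat \<Rightarrow> mat \<Rightarrow> mat" where "Jop M X = msc (1/2) (madd (mmul M X) (mmul X M))"
definition msum :: "('i \<Rightarrow> mat) \<Rightarrow> 'i set \<Rightarrow> mat" where "msum f I = (\<lambda>a b. \<Sum>i\<in>I. f i a b)"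

lemma hi_sym: "hmat_inner A B = hmat_inner B A"
  unfolding hmat_inner_def qRe_sum
  by (subst sum.swap) (simp add: mult.commute)

lemma hi_madd_l[simp]: "hmat_inner (madd A B) C = hmat_inner A C + hmat_inner B C"
  by (simp add: hmat_inner_def madd_def qRe_sum distrib_right sum.distrib)
lemma hi_madd_r[simp]: "hmat_inner C (madd A B) = hmat_inner C A + hmat_inner C B"
  by (simp add: hi_sym[of C])
lemma hi_msc_l[simp]: "hmat_inner (msc r A) C = r * hmat_inner A C"
proof -
  have "\<And>a b. qRe (qreal r * A a b * C b a) = r * qRe (A a b * C b a)"
    by (simp add: mult.assoc del: quat_mult_comps) (simp add: qRe_qreal_mult)
  then show ?thesis by (simp add: hmat_inner_def msc_def qRe_sum sum_distrib_left del: quat_mult_comps)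
qed
lemma hi_msc_r[simp]: "hmat_inner C (msc r A) = r * hmat_inner C A"
  by (simp add: hi_sym[of C])
lemma hi_msum_l: "finite I \<Longrightarrow> hmat_inner (msum f I) C = (\<Sum>i\<in>I. hmat_inner (f i) C)"
  unfolding hmat_inner_def msum_def qRe_sum sum_distrib_right
  by (subst sum.swap, subst (2) sum.swap) simp
lemma hi_msum_r: "finite I \<Longrightarrow> hmat_inner C (msum f I) = (\<Sum>i\<in>I. hmat_inner C (f i))"
  by (simp add: hi_sym[of C] hi_msum_l)

lemma hi_cyc: "hmat_inner (mmul A B) C = hmat_inner A (mmul B C)"
proof -
  have "(\<Sum>a\<in>UNIV. \<Sum>b\<in>UNIV. (\<Sum>k\<in>UNIV. A a k * B k b) * C b a)
      = (\<Sum>a\<in>UNIV. \<Sum>b\<in>UNIV. \<Sum>k\<in>UNIV. A a k * B k b * C b a)"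
    by (simp only: sum_distrib_right)
  also have "\<dots> = (\<Sum>a\<in>UNIV. \<Sum>k\<in>UNIV. \<Sum>b\<in>UNIV. A a k * (B k b * C b a))"
    by (rule sum.cong[OF refl], subst sum.swap) (simp only: mult.assoc)
  also have "\<dots> = (\<Sum>a\<in>UNIV. \<Sum>k\<in>UNIV. A a k * (\<Sum>b\<in>UNIV. B k b * C b a))"
    by (simp only: sum_distrib_left)
  finally show ?thesis by (simp only: hmat_inner_def mmul_def)
qed

lemma hermD: "herm A \<Longrightarrow> A b a = qcnj (A a b)" unfolding herm_def by blast

lemma herm_pos: "herm Z \<Longrightarrow> hmat_inner Z Z \<ge> 0"
proof -
  assume h: "herm Z"
  have "qRe (Z a b * Z b a) \<ge> 0" for a b
  proof -
    have "Z b a = qcnj (Z a b)" by (rule hermD[OF h])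
    then have "Z a b * Z b a = qreal (qnorm2 (Z a b))" by (simp only: mult_qcnj_self(1))
    then show ?thesis by (simp only: qreal_comps qnorm2_nonneg)
  qed
  then show ?thesis unfolding hmat_inner_def qRe_sum
    by (simp add: sum_nonneg)
qed

lemma herm_madd: "herm A \<Longrightarrow> herm B \<Longrightarrow> herm (madd A B)"
  unfolding herm_def madd_def by (metis qcnj_add)
lemma herm_msc: "herm A \<Longrightarrow> herm (msc r A)"
  unfolding herm_def msc_def by (metis qcnj_mult qreal_mult_comm qcnj_qreal)
lemma herm_Imat: "herm Imat" by (simp add: herm_def Imat_def quat_eq_iff)
lemma herm_outer: "herm (outer x)" by (simp add: herm_def outer_def qcnj_mult)
lemma herm_msum: "(\<And>i. i \<in> I \<Longrightarrow> herm (f i)) \<Longrightarrow> herm (msum f I)"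
proof -
  assume h: "\<And>i. i \<in> I \<Longrightarrow> herm (f i)"
  show ?thesis unfolding herm_def
  proof (intro allI)
    fix a b
    show "msum f I b a = qcnj (msum f I a b)"
      unfolding msum_def qcnj_sum by (rule sum.cong[OF refl], rule hermD[OF h])
  qed
qed
lemma herm_mmul_cnj: "herm A \<Longrightarrow> herm B \<Longrightarrow> mmul B A b a = qcnj (mmul A B a b)"
proof -
  assume hA: "herm A" and hB: "herm B"
  have "\<And>k. B b k * A k a = qcnj (A a k * B k b)"
    using hermD[OF hA, of k a for k] hermD[OF hB, of b k for k] by (metis qcnj_mult)
  then show ?thesis by (simp add: mmul_def qcnj_sum del: quat_mult_comps)
qed
lemma herm_Jop: "herm M \<Longrightarrow> herm X \<Longrightarrow> herm (Jop M X)"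
proof -
  assume hM: "herm M" and hX: "herm X"
  have "herm (madd (mmul M X) (mmul X M))"
    unfolding herm_def[of "madd (mmul M X) (mmul X M)"]
  proof (intro allI)
    fix a b
    have 1: "mmul X M b a = qcnj (mmul M X a b)" by (rule herm_mmul_cnj[OF hM hX])
    have 2: "mmul M X b a = qcnj (mmul X M a b)" by (rule herm_mmul_cnj[OF hX hM])
    show "madd (mmul M X) (mmul X M) b a = qcnj (madd (mmul M X) (mmul X M) a b)"
      unfolding madd_def 1 2 by (simp add: add.commute)
  qed
  then show ?thesis unfolding Jop_def by (rule herm_msc)
qed

lemma Jop_selfadj: "hmat_inner (Jop M X) Y = hmat_inner X (Jop M Y)"
proof -
  have 1: "hmat_inner (mmul M X) Y = hmat_inner X (mmul Y M)"
    by (metis hi_cyc hi_sym)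
  have 2: "hmat_inner (mmul X M) Y = hmat_inner X (mmul M Y)" by (rule hi_cyc)
  show ?thesis by (simp add: Jop_def 1 2)
qed

lemma if01_mult: "(if P then 1 else 0) * (q::quat) = (if P then q else 0)"
   "q * (if P then 1 else 0) = (if P then q else 0)" by auto

lemma mmul_Imat_l[simp]: "mmul Imat X = X"
  by (rule ext)+ (simp add: mmul_def Imat_def if01_mult sum.delta sum.delta')
lemma mmul_Imat_r[simp]: "mmul X Imat = X"
  by (rule ext)+ (simp add: mmul_def Imat_def if01_mult sum.delta sum.delta')

lemma madd_self_half: "msc (1/2) (madd X X) = X"
  by (rule ext)+ (simp add: msc_def madd_def quat_eq_iff)
lemma Jop_I_l[simp]: "Jop Imat X = X" by (simp add: Jop_def madd_self_half)
lemma Jop_I_r[simp]: "Jop X Imat = X" by (simp add: Jop_def madd_self_half)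

lemma mmul_madd_l: "mmul (madd A B) C = madd (mmul A C) (mmul B C)"
  by (rule ext)+ (simp add: mmul_def madd_def distrib_right sum.distrib)
lemma mmul_madd_r: "mmul C (madd A B) = madd (mmul C A) (mmul C B)"
  by (rule ext)+ (simp add: mmul_def madd_def distrib_left sum.distrib)
lemma mmul_msc_l: "mmul (msc r A) C = msc r (mmul A C)"
  by (rule ext)+ (simp add: mmul_def msc_def sum_distrib_left mult.assoc del: quat_mult_comps)
lemma mmul_msc_r: "mmul C (msc r A) = msc r (mmul C A)"
proof (rule ext)+
  fix a b
  have "\<And>k. C a k * (qreal r * A k b) = qreal r * (C a k * A k b)"
    by (metis mult.assoc qreal_mult_comm)
  then show "mmul C (msc r A) a b = msc r (mmul C A) a b"
    by (simp add: mmul_def msc_def sum_distrib_left del: quat_mult_comps)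
qed
lemma msc_madd: "msc r (madd A B) = madd (msc r A) (msc r B)"
  by (rule ext)+ (simp add: msc_def madd_def distrib_left)
lemma msc_msc: "msc r (msc s A) = msc (r * s) A"
  by (rule ext)+ (simp add: msc_def mult.assoc[symmetric] qreal_mult_qreal del: quat_mult_comps)
lemma madd_comm: "madd A B = madd B A" by (rule ext)+ (simp add: madd_def add.commute)
lemma madd_assoc: "madd (madd A B) C = madd A (madd B C)" by (rule ext)+ (simp add: madd_def add.assoc)
lemma madd_left_comm: "madd A (madd B C) = madd B (madd A C)" by (rule ext)+ (simp add: madd_def add_ac)

lemma Jop_madd_l[simp]: "Jop (madd A B) X = madd (Jop A X) (Jop B X)"
  by (simp add: Jop_def mmul_madd_l mmul_madd_r msc_madd madd_assoc madd_left_comm)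
lemma Jop_madd_r[simp]: "Jop X (madd A B) = madd (Jop X A) (Jop X B)"
  by (simp add: Jop_def mmul_madd_l mmul_madd_r msc_madd madd_assoc madd_left_comm)
lemma Jop_msc_l[simp]: "Jop (msc r A) X = msc r (Jop A X)"
  by (simp add: Jop_def mmul_msc_l mmul_msc_r msc_madd msc_msc mult.commute)
lemma Jop_msc_r[simp]: "Jop X (msc r A) = msc r (Jop X A)"
  by (simp add: Jop_def mmul_msc_l mmul_msc_r msc_madd msc_msc mult.commute)

lemma qRe_assoc4: "qRe ((qcnj c * a) * (qcnj b * d)) = qRe ((a * qcnj b) * (d * qcnj c))"
proof -
  have "(qcnj c * a) * (qcnj b * d) = qcnj c * ((a * qcnj b) * d)" by (simp add: mult.assoc)
  then have "qRe ((qcnj c * a) * (qcnj b * d)) = qRe (((a * qcnj b) * d) * qcnj c)"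
    by (metis qRe_comm)
  then show ?thesis by (simp only: mult.assoc)
qed

lemma hi_outer: "hmat_inner (outer x) (outer y) = qnorm2 (hinner x y)"
proof -
  let ?h = "hinner x y"
  have c: "qcnj ?h = (\<Sum>a\<in>UNIV. qcnj (y$a) * x$a)"
    by (simp add: hinner_def qcnj_sum qcnj_mult)
  have "qnorm2 ?h = qRe (qcnj ?h * ?h)" by (simp only: mult_qcnj_self(2) qreal_comps)
  also have "qcnj ?h * ?h = (\<Sum>a\<in>UNIV. \<Sum>b\<in>UNIV. (qcnj (y$a) * x$a) * (qcnj (x$b) * y$b))"
    unfolding c by (simp add: hinner_def sum_product)
  also have "qRe \<dots> = (\<Sum>a\<in>UNIV. \<Sum>b\<in>UNIV. qRe ((x$a * qcnj (x$b)) * (y$b * qcnj (y$a))))"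
    by (simp only: qRe_sum qRe_assoc4)
  finally show ?thesis by (simp add: hmat_inner_def outer_def qRe_sum del: quat_mult_comps)
qed

lemma qRe_of_nat[simp]: "qRe (of_nat n) = of_nat n" by (induct n) simp_all
lemma qRe_numeral[simp]: "qRe (numeral n) = numeral n"
  by (metis of_nat_numeral qRe_of_nat)

lemma hi_outer_I: "hmat_inner (outer x) Imat = vnorm2 x"
  by (simp add: hmat_inner_def outer_def Imat_def if01_mult sum.delta' qRe_sum vnorm2_def
      mult_qcnj_self del: quat_mult_comps)
lemma hi_I_outer: "hmat_inner Imat (outer x) = vnorm2 x"
  by (subst hi_sym) (rule hi_outer_I)
lemma hi_I_I: "hmat_inner Imat Imat = 3"
  by (simp add: hmat_inner_def Imat_def if01_mult sum.delta' qRe_sum)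

lemma outer_sq: "mmul (outer x) (outer x) = msc (vnorm2 x) (outer x)"
proof (rule ext)+
  fix a b
  have "(\<Sum>k\<in>UNIV. x$a * qcnj (x$k) * (x$k * qcnj (x$b)))
     = (\<Sum>k\<in>UNIV. x$a * (qcnj (x$k) * x$k) * qcnj (x$b))"
    by (simp add: mult.assoc)
  also have "\<dots> = x$a * qreal (vnorm2 x) * qcnj (x$b)"
    by (simp add: mult_qcnj_self vnorm2_def qreal_sum sum_distrib_left sum_distrib_right del: quat_mult_comps)
  also have "\<dots> = qreal (vnorm2 x) * (x$a * qcnj (x$b))"
    by (metis mult.assoc qreal_mult_comm)
  finally show "mmul (outer x) (outer x) a b = msc (vnorm2 x) (outer x) a b"
    by (simp add: mmul_def outer_def msc_def del: quat_mult_comps)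
qed

lemma Gamma_eq: "Gamma_mat x = madd (outer x) (msc (- (vnorm2 x / 3)) Imat)"
  by (rule ext)+ (simp add: Gamma_mat_def madd_def msc_def outer_def Imat_def quat_eq_iff)

lemma hi_Gamma: "hmat_inner (Gamma_mat x) (Gamma_mat y) = qnorm2 (hinner x y) - vnorm2 x * vnorm2 y / 3"
  by (simp add: Gamma_eq hi_outer hi_outer_I hi_I_outer hi_I_I algebra_simps)

lemma hi_Gamma_I: "hmat_inner (Gamma_mat x) Imat = 0"
  by (simp add: Gamma_eq hi_outer_I hi_I_I)

lemma rank_one: "hmat_inner (outer x) (Jop Q (outer x)) = vnorm2 x * hmat_inner (outer x) Q"
proof -
  have 1: "hmat_inner (outer x) (mmul Q (outer x)) = vnorm2 x * hmat_inner (outer x) Q"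
    by (metis hi_cyc hi_sym outer_sq hi_msc_l)
  have 2: "hmat_inner (outer x) (mmul (outer x) Q) = vnorm2 x * hmat_inner (outer x) Q"
    by (metis hi_cyc outer_sq hi_msc_l)
  show ?thesis by (simp add: Jop_def 1 2)
qed

lemma hinner_self: "hinner x x = qreal (vnorm2 x)"
  by (simp add: hinner_def vnorm2_def mult_qcnj_self qreal_sum)

definition qdot :: "quat \<Rightarrow> quat \<Rightarrow> real" where
  "qdot p q = qRe p * qRe q + qIm1 p * qIm1 q + qIm2 p * qIm2 q + qIm3 p * qIm3 q"

definition hm :: "real \<Rightarrow> real \<Rightarrow> real \<Rightarrow> quat \<Rightarrow> quat \<Rightarrow> quat \<Rightarrow> mat" where
  "hm d1 d2 d3 p q r = (\<lambda>a b. if a = 1 then (if b = 1 then qreal d1 else if b = 2 then p else q)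
      else if a = 2 then (if b = 1 then qcnj p else if b = 2 then qreal d2 else r)
      else (if b = 1 then qcnj q else if b = 2 then qcnj r else qreal d3))"

lemma three_neq[simp]: "(1::3) \<noteq> 2" "(1::3) \<noteq> 3" "(2::3) \<noteq> 3" "(2::3) \<noteq> 1" "(3::3) \<noteq> 1" "(3::3) \<noteq> 2"
  by simp_all

lemma herm_diag: "herm A \<Longrightarrow> A k k = qreal (qRe (A k k))"
  using hermD[of A k k] by (simp add: quat_eq_iff)

lemma herm_expand: "herm A \<Longrightarrow> A = hm (qRe (A 1 1)) (qRe (A 2 2)) (qRe (A 3 3)) (A 1 2) (A 1 3) (A 2 3)"
proof (rule ext)+
  fix a b assume h: "herm A"
  note d = herm_diag[OF h]
  show "A a b = hm (qRe (A 1 1)) (qRe (A 2 2)) (qRe (A 3 3)) (A 1 2) (A 1 3) (A 2 3) a b"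
    using exhaust_3[of a] exhaust_3[of b]
    by (auto simp: hm_def hermD[OF h, of 1 2] hermD[OF h, of 1 3] hermD[OF h, of 2 3] intro: d)
qed

lemma herm_hm: "herm (hm d1 d2 d3 p q r)"
  unfolding herm_def
proof (intro allI)
  fix a b show "hm d1 d2 d3 p q r b a = qcnj (hm d1 d2 d3 p q r a b)"
    using exhaust_3[of a] exhaust_3[of b] by (auto simp: hm_def)
qed

lemma hi_hm: "hmat_inner (hm d1 d2 d3 p q r) (hm e1 e2 e3 p' q' r') =
   d1 * e1 + d2 * e2 + d3 * e3 + 2 * (qdot p p' + qdot q q' + qdot r r')"
  by (simp add: hmat_inner_def sum_3 hm_def qdot_def)

definition qi :: quat where "qi = Quat 0 1 0 0"
definition qj :: quat where "qj = Quat 0 0 1 0"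
definition qk :: quat where "qk = Quat 0 0 0 1"

definition bsum :: "(mat \<Rightarrow> real) \<Rightarrow> real" where
  "bsum F = F (hm 1 0 0 0 0 0) + F (hm 0 1 0 0 0 0) + F (hm 0 0 1 0 0 0)
    + (F (hm 0 0 0 1 0 0) + F (hm 0 0 0 qi 0 0) + F (hm 0 0 0 qj 0 0) + F (hm 0 0 0 qk 0 0)
    + F (hm 0 0 0 0 1 0) + F (hm 0 0 0 0 qi 0) + F (hm 0 0 0 0 qj 0) + F (hm 0 0 0 0 qk 0)
    + F (hm 0 0 0 0 0 1) + F (hm 0 0 0 0 0 qi) + F (hm 0 0 0 0 0 qj) + F (hm 0 0 0 0 0 qk)) / 2"

lemma qdot_simps[simp]: "qdot p 0 = 0" "qdot p 1 = qRe p" "qdot p qi = qIm1 p" "qdot p qj = qIm2 p" "qdot p qk = qIm3 p"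
  "qdot 0 p = 0" "qdot 1 p = qRe p" "qdot qi p = qIm1 p" "qdot qj p = qIm2 p" "qdot qk p = qIm3 p"
  by (simp_all add: qdot_def qi_def qj_def qk_def)

lemma herm_ex: "herm A \<Longrightarrow> \<exists>d1 d2 d3 p q r. A = hm d1 d2 d3 p q r"
  using herm_expand by blast

lemma parseval_hm: "bsum (\<lambda>E. hmat_inner (hm d1 d2 d3 p q r) E * hmat_inner E (hm e1 e2 e3 p' q' r'))
   = hmat_inner (hm d1 d2 d3 p q r) (hm e1 e2 e3 p' q' r')"
  by (simp add: bsum_def hi_hm qdot_def qi_def qj_def qk_def algebra_simps)

lemma parseval: "herm A \<Longrightarrow> herm B \<Longrightarrow> bsum (\<lambda>E. hmat_inner A E * hmat_inner E B) = hmat_inner A B"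
proof -
  assume hA: "herm A" and hB: "herm B"
  obtain d1 d2 d3 p q r where a: "A = hm d1 d2 d3 p q r" using herm_expand[OF hA] by blast
  obtain e1 e2 e3 p' q' r' where b: "B = hm e1 e2 e3 p' q' r'" using herm_expand[OF hB] by blast
  show ?thesis unfolding a b by (rule parseval_hm)
qed

lemma herm_basis: "herm (hm d1 d2 d3 p q r)" by (rule herm_hm)

lemma Jop_hm: "Jop (hm a1 a2 a3 p q r) (hm e1 e2 e3 u v w) =
  hm (a1*e1 + qdot p u + qdot q v) (a2*e2 + qdot p u + qdot r w) (a3*e3 + qdot q v + qdot r w)
     (qreal (1/2) * (qreal (a1+a2) * u + qreal (e1+e2) * p + q * qcnj w + v * qcnj r))
     (qreal (1/2) * (qreal (a1+a3) * v + qreal (e1+e3) * q + p * w + u * r))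
     (qreal (1/2) * (qreal (a2+a3) * w + qreal (e2+e3) * r + qcnj p * v + qcnj u * q))"
proof (rule ext)+
  fix a b
  show "Jop (hm a1 a2 a3 p q r) (hm e1 e2 e3 u v w) a b = hm (a1*e1 + qdot p u + qdot q v) (a2*e2 + qdot p u + qdot r w) (a3*e3 + qdot q v + qdot r w)
     (qreal (1/2) * (qreal (a1+a2) * u + qreal (e1+e2) * p + q * qcnj w + v * qcnj r))
     (qreal (1/2) * (qreal (a1+a3) * v + qreal (e1+e3) * q + p * w + u * r))
     (qreal (1/2) * (qreal (a2+a3) * w + qreal (e2+e3) * r + qcnj p * v + qcnj u * q)) a b"
    using exhaust_3[of a] exhaust_3[of b]
    by (auto simp: Jop_def msc_def madd_def mmul_def sum_3 hm_def quat_eq_iff qdot_def algebra_simps)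
qed

lemma Imat_hm: "Imat = hm 1 1 1 0 0 0"
proof (rule ext)+
  fix a b show "Imat a b = hm 1 1 1 0 0 0 a b"
    using exhaust_3[of a] exhaust_3[of b] by (auto simp: Imat_def hm_def quat_eq_iff)
qed

lemma trace_hm_aux: "bsum (\<lambda>E. hmat_inner (Jop (hm a1 a2 a3 p q r) E) (Jop (hm b1 b2 b3 p' q' r') E))
  = 2 * hmat_inner (hm a1 a2 a3 p q r) (hm b1 b2 b3 p' q' r')
    + hmat_inner (hm a1 a2 a3 p q r) Imat * hmat_inner (hm b1 b2 b3 p' q' r') Imat"
  unfolding bsum_def Jop_hm Imat_hm hi_hm
  by (simp add: qdot_def qi_def qj_def qk_def algebra_simps)

lemma trace_J: "herm M \<Longrightarrow> herm N \<Longrightarrow> bsum (\<lambda>E. hmat_inner (Jop M E) (Jop N E))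
   = 2 * hmat_inner M N + hmat_inner M Imat * hmat_inner N Imat"
proof -
  assume hA: "herm M" and hB: "herm N"
  obtain d1 d2 d3 p q r where a: "M = hm d1 d2 d3 p q r" using herm_ex[OF hA] by blast
  obtain e1 e2 e3 p' q' r' where b: "N = hm e1 e2 e3 p' q' r'" using herm_ex[OF hB] by blast
  show ?thesis unfolding a b by (rule trace_hm_aux)
qed

lemma bsum_add: "bsum (\<lambda>E. f E + g E) = bsum f + bsum g"
  by (simp add: bsum_def algebra_simps add_divide_distrib)
lemma bsum_cmult: "bsum (\<lambda>E. c * f E) = c * bsum f"
  by (simp add: bsum_def algebra_simps)
lemma bsum_sum: "finite I \<Longrightarrow> bsum (\<lambda>E. \<Sum>i\<in>I. f i E) = (\<Sum>i\<in>I. bsum (f i))"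
  by (induction I rule: finite_induct) (simp_all add: bsum_add, simp add: bsum_def)
lemma bsum_nonneg: "(\<And>E. herm E \<Longrightarrow> f E \<ge> 0) \<Longrightarrow> bsum f \<ge> 0"
  unfolding bsum_def by (intro add_nonneg_nonneg divide_nonneg_nonneg; simp add: herm_hm)

lemma parseval2: "herm A \<Longrightarrow> herm B \<Longrightarrow> bsum (\<lambda>E. hmat_inner A E * hmat_inner B E) = hmat_inner A B"
  using parseval[of A B] by (simp add: hi_sym[of B])

lemma hi_I_Jop: "hmat_inner Imat (Jop M X) = hmat_inner M X"
  by (metis Jop_selfadj Jop_I_r)

lemma key_gen:
  assumes h: "herm P" "herm Q" "herm A" "herm B" "herm A'" "herm B'" "herm M" "herm M'"
  shows "bsum (\<lambda>E. hmat_inner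
     (madd (madd (msc (hmat_inner P E) A) (msc (hmat_inner Imat E) B)) (Jop M E))
     (madd (madd (msc (hmat_inner Q E) A') (msc (hmat_inner Imat E) B')) (Jop M' E)))
   = hmat_inner P Q * hmat_inner A A' + hmat_inner P Imat * hmat_inner A B' + hmat_inner (Jop M' A) P
     + hmat_inner Imat Q * hmat_inner B A' + 3 * hmat_inner B B' + hmat_inner (Jop M' B) Imat
     + hmat_inner (Jop M A') Q + hmat_inner (Jop M B') Imat
     + (2 * hmat_inner M M' + hmat_inner M Imat * hmat_inner M' Imat)"
proof -
  have sa: "\<And>C N E. hmat_inner C (Jop N E) = hmat_inner (Jop N C) E" by (simp add: Jop_selfadj)
  have sb: "\<And>C N E. hmat_inner (Jop N E) C = hmat_inner (Jop N C) E" by (metis Jop_selfadj hi_sym)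
  have e: "\<And>E. hmat_inner
     (madd (madd (msc (hmat_inner P E) A) (msc (hmat_inner Imat E) B)) (Jop M E))
     (madd (madd (msc (hmat_inner Q E) A') (msc (hmat_inner Imat E) B')) (Jop M' E))
   = hmat_inner A A' * (hmat_inner P E * hmat_inner Q E) + hmat_inner A B' * (hmat_inner P E * hmat_inner Imat E)
     + hmat_inner (Jop M' A) E * hmat_inner P E
     + hmat_inner B A' * (hmat_inner Imat E * hmat_inner Q E) + hmat_inner B B' * (hmat_inner Imat E * hmat_inner Imat E)
     + hmat_inner (Jop M' B) E * hmat_inner Imat E
     + hmat_inner (Jop M A') E * hmat_inner Q E + hmat_inner (Jop M B') E * hmat_inner Imat E
     + hmat_inner (Jop M E) (Jop M' E)"
    by (simp add: sa[of A M'] sa[of B M'] sb[where C=A' and N=M] sb[where C=B' and N=M] algebra_simps)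
  have hJ: "herm (Jop M' A)" "herm (Jop M' B)" "herm (Jop M A')" "herm (Jop M B')"
    using h by (simp_all add: herm_Jop)
  show ?thesis
    unfolding e bsum_add bsum_cmult
    by (simp add: parseval2 h hJ herm_Imat trace_J hi_I_I)
qed

definition Ax :: "quat^3 \<Rightarrow> mat" where "Ax x = madd (outer x) (msc (-(vnorm2 x/4)) Imat)"
definition Bx :: "quat^3 \<Rightarrow> mat" where "Bx x = madd (msc (-(vnorm2 x/4)) (outer x)) (msc (vnorm2 x^2/14) Imat)"
definition Mx :: "quat^3 \<Rightarrow> mat" where "Mx x = madd (msc (-(vnorm2 x/4)) (outer x)) (msc (vnorm2 x^2/28) Imat)"
definition Sop :: "quat^3 \<Rightarrow> mat \<Rightarrow> mat" where
  "Sop x E = madd (madd (msc (hmat_inner (outer x) E) (Ax x)) (msc (hmat_inner Imat E) (Bx x))) (Jop (Mx x) E)"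

lemma herm_ABM: "herm (Ax x)" "herm (Bx x)" "herm (Mx x)"
  by (simp_all add: Ax_def Bx_def Mx_def herm_madd herm_msc herm_outer herm_Imat)

lemma herm_Sop: "herm E \<Longrightarrow> herm (Sop x E)"
  by (simp add: Sop_def herm_madd herm_msc herm_ABM herm_Jop)

lemma Jop_comm: "Jop M X = Jop X M"
  by (simp add: Jop_def madd_comm)

lemma hi_outer_self: "hmat_inner (outer x) (outer x) = (vnorm2 x)^2"
  by (simp add: hi_outer hinner_self qnorm2_def)

lemma rk: "hmat_inner (Jop Q (outer x)) (outer x) = vnorm2 x * hmat_inner (outer x) Q"
          "hmat_inner (Jop (outer x) Q) (outer x) = vnorm2 x * hmat_inner (outer x) Q"
  using rank_one[of x Q] by (simp_all add: hi_sym[of "Jop _ _"] Jop_comm[of "outer x" Q])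

lemma hi_Jop_I: "hmat_inner (Jop N X) Imat = hmat_inner N X"
  by (metis hi_I_Jop hi_sym)

lemma key:
  "bsum (\<lambda>E. hmat_inner (Sop x E) (Sop y E)) =
     (hmat_inner (outer x) (outer y))^2 - 3/4 * hmat_inner (outer x) (outer y) * vnorm2 x * vnorm2 y
     + 3/28 * (vnorm2 x)^2 * (vnorm2 y)^2"
proof -
  have s: "hmat_inner (outer y) (outer x) = hmat_inner (outer x) (outer y)" by (rule hi_sym)
  show ?thesis
    unfolding Sop_def
    apply (subst key_gen)
    apply (simp_all add: herm_outer herm_ABM)
    apply (simp add: Ax_def Bx_def Mx_def rk hi_Jop_I hi_I_Jop hi_outer_I hi_I_outer hi_I_I hi_outer_self s)
    apply (simp add: algebra_simps power2_eq_square)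
    apply (simp add: field_simps)
    done
qed

definition Kf :: "quat^3 \<Rightarrow> quat^3 \<Rightarrow> real" where
  "Kf x y = (hmat_inner (outer x) (outer y))^2 - 3/4 * hmat_inner (outer x) (outer y) * vnorm2 x * vnorm2 y
     + 3/28 * (vnorm2 x)^2 * (vnorm2 y)^2"

lemma psd:
  assumes "finite I"
  shows "0 \<le> (\<Sum>i\<in>I. \<Sum>j\<in>I. c i * c j * Kf (x i) (x j))"
proof -
  define Z where "Z E = msum (\<lambda>i. msc (c i) (Sop (x i) E)) I" for E
  have "0 \<le> bsum (\<lambda>E. hmat_inner (Z E) (Z E))"
    by (rule bsum_nonneg, rule herm_pos) (auto simp: Z_def intro!: herm_msum herm_msc herm_Sop)
  also have "(\<lambda>E. hmat_inner (Z E) (Z E)) = (\<lambda>E. \<Sum>i\<in>I. \<Sum>j\<in>I. c i * c j * hmat_inner (Sop (x i) E) (Sop (x j) E))"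
    apply (rule ext)
    apply (simp add: Z_def hi_msum_l hi_msum_r assms sum_distrib_left mult.assoc)
    apply (subst sum.swap)
    apply (simp add: mult.left_commute)
    done
  also have "bsum \<dots> = (\<Sum>i\<in>I. \<Sum>j\<in>I. c i * c j * Kf (x i) (x j))"
    by (simp add: bsum_sum assms bsum_cmult key Kf_def)
  finally show ?thesis .
qed

type_synonym r15 = "real \<times> real \<times> real \<times> real \<times> real \<times> real \<times> real \<times> real \<times> real \<times> real \<times> real \<times> real \<times> real \<times> real \<times> real"

definition hc :: "mat \<Rightarrow> r15" where
  "hc A = (qRe (A 1 1), qRe (A 2 2), qRe (A 3 3),
     qRe (A 1 2), qIm1 (A 1 2), qIm2 (A 1 2), qIm3 (A 1 2),
     qRe (A 1 3), qIm1 (A 1 3), qIm2 (A 1 3), qIm3 (A 1 3),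
     qRe (A 2 3), qIm1 (A 2 3), qIm2 (A 2 3), qIm3 (A 2 3))"

lemma DIM_r15: "DIM(r15) = 15" by simp

lemma hc_madd: "hc (madd A B) = hc A + hc B" by (simp add: hc_def madd_def)
lemma hc_msc: "hc (msc r A) = r *\<^sub>R hc A" by (simp add: hc_def msc_def)
lemma hc_msum: "finite I \<Longrightarrow> hc (msum f I) = (\<Sum>i\<in>I. hc (f i))"
proof (induction I rule: finite_induct)
  case empty show ?case by (simp add: hc_def msum_def zero_prod_def)
next
  case (insert a F)
  have "msum f (insert a F) = madd (f a) (msum f F)"
    using insert by (simp add: msum_def madd_def)
  then show ?case using insert by (simp add: hc_madd)
qed

lemma hc_zero_hi: "herm A \<Longrightarrow> herm W \<Longrightarrow> hc A = 0 \<Longrightarrow> hmat_inner A W = 0"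
proof -
  assume hA: "herm A" and hW: "herm W" and z: "hc A = 0"
  obtain d1 d2 d3 p q r where a: "A = hm d1 d2 d3 p q r" using herm_ex[OF hA] by blast
  obtain e1 e2 e3 p' q' r' where b: "W = hm e1 e2 e3 p' q' r'" using herm_ex[OF hW] by blast
  have "d1 = 0 \<and> d2 = 0 \<and> d3 = 0 \<and> p = 0 \<and> q = 0 \<and> r = 0"
    using z unfolding a by (simp add: hc_def hm_def zero_prod_def quat_eq_iff)
  then show ?thesis unfolding a b hi_hm by (simp add: qdot_def)
qed

lemma herm_Gamma: "herm (Gamma_mat x)"
  by (simp add: Gamma_eq herm_madd herm_outer herm_msc herm_Imat)

lemma hi_Gamma_self: "hmat_inner (Gamma_mat x) (Gamma_mat x) = 2/3 * (vnorm2 x)^2"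
  by (simp add: hi_Gamma hinner_self qnorm2_def power2_eq_square)

lemma rank_sum:
  fixes x :: "nat \<Rightarrow> quat^3"
  assumes G: "\<And>i j. i < 15 \<Longrightarrow> j < 15 \<Longrightarrow> i \<noteq> j \<Longrightarrow> hmat_inner (Gamma_mat (x i)) (Gamma_mat (x j)) = -1/21"
  shows "(\<Sum>i<15. 1/(14 * (vnorm2 (x i))^2 + 1)) = 1"
proof -
  define V where "V i = hc (Gamma_mat (x i))" for i
  define e where "e = hc Imat"
  define N where "N = {..<15::nat}"
  have finN: "finite N" by (simp add: N_def)
  have hG: "herm (Gamma_mat (x i))" for i by (rule herm_Gamma)
  have d: "hmat_inner (Gamma_mat (x i)) (Gamma_mat (x i)) = 2/3 * (vnorm2 (x i))^2" for i
    by (rule hi_Gamma_self)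
  have inj: "inj_on V N"
  proof (rule inj_onI, rule ccontr)
    fix i j assume i: "i \<in> N" and j: "j \<in> N" and eq: "V i = V j" and ne: "i \<noteq> j"
    let ?D = "madd (Gamma_mat (x i)) (msc (-1) (Gamma_mat (x j)))"
    have "hc ?D = 0" using eq by (simp add: hc_madd hc_msc V_def)
    then have "hmat_inner ?D (Gamma_mat (x i)) = 0"
      by (intro hc_zero_hi herm_madd herm_msc hG)
    moreover have "hmat_inner ?D (Gamma_mat (x i)) = 2/3 * (vnorm2 (x i))^2 + 1/21"
      using G[of j i] i j ne d[of i] by (simp add: N_def)
    moreover have "2/3 * (vnorm2 (x i))^2 + 1/21 > (0::real)"
      by (simp add: add_nonneg_pos)
    ultimately show False by simp
  qed
  have enot: "e \<notin> V ` N"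
  proof
    assume "e \<in> V ` N"
    then obtain i where "e = V i" by blast
    let ?D = "madd (Gamma_mat (x i)) (msc (-1) Imat)"
    have "hc ?D = 0" using \<open>e = V i\<close> by (simp add: hc_madd hc_msc V_def e_def)
    then have "hmat_inner ?D Imat = 0"
      by (intro hc_zero_hi herm_madd herm_msc hG herm_Imat)
    moreover have "hmat_inner ?D Imat = -3" by (simp add: hi_Gamma_I hi_I_I)
    ultimately show False by simp
  qed
  define S where "S = insert e (V ` N)"
  have finS: "finite S" by (simp add: S_def finN)
  have cardS: "card S = 16"
    using enot inj finN by (simp add: S_def card_image N_def)
  have "dependent S"
    by (rule dependent_biggerset) (simp add: cardS)
  then obtain u where u1: "\<exists>v\<in>S. u v \<noteq> 0" and u2: "(\<Sum>v\<in>S. u v *\<^sub>R v) = 0"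
    using real_vector.dependent_finite[OF finS] by blast
  define a where "a i = u (V i)" for i
  define b where "b = u e"
  have sumS: "(\<Sum>v\<in>S. u v *\<^sub>R v) = b *\<^sub>R e + (\<Sum>i\<in>N. a i *\<^sub>R V i)"
    using enot finN inj by (simp add: S_def b_def a_def sum.reindex)
  define Zm where "Zm = madd (msum (\<lambda>i. msc (a i) (Gamma_mat (x i))) N) (msc b Imat)"
  have hZ: "herm Zm" unfolding Zm_def
    by (intro herm_madd herm_msum herm_msc hG herm_Imat)
  have "hc Zm = 0"
    using u2 unfolding sumS Zm_def
    by (simp add: hc_madd hc_msc hc_msum finN V_def e_def add.commute)
  then have z: "\<And>W. herm W \<Longrightarrow> hmat_inner Zm W = 0"
    using hZ hc_zero_hi by blast
  have "hmat_inner Zm Imat = 3 * b"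
    by (simp add: Zm_def hi_msum_l finN hi_Gamma_I hi_I_I)
  then have b0: "b = 0" using z[OF herm_Imat] by simp
  define s where "s = (\<Sum>i\<in>N. a i)"
  have ak: "a k * (14 * (vnorm2 (x k))^2 + 1) = s" if k: "k \<in> N" for k
  proof -
    have "hmat_inner Zm (Gamma_mat (x k)) = (\<Sum>i\<in>N. a i * hmat_inner (Gamma_mat (x i)) (Gamma_mat (x k)))"
      by (simp add: Zm_def hi_msum_l finN b0)
    also have "\<dots> = a k * (2/3 * (vnorm2 (x k))^2) + (\<Sum>i\<in>N-{k}. a i * (-1/21))"
      using k finN by (simp add: sum.remove d G N_def)
    also have "(\<Sum>i\<in>N-{k}. a i * (-1/21)) = - (s - a k) / 21"
    proof -
      have r: "(\<Sum>i\<in>N-{k}. a i) = s - a k" using k finN by (simp add: s_def sum.remove)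
      show ?thesis by (simp add: sum_negf sum_divide_distrib[symmetric] r) (simp add: field_simps)
    qed
    finally have "a k * (2/3 * (vnorm2 (x k))^2) - (s - a k) / 21 = 0"
      using z[OF hG[of k]] by linarith
    moreover have "21 * (a k * (2/3 * (vnorm2 (x k))^2) - (s - a k) / 21) = 14 * (a k * (vnorm2 (x k))^2) - (s - a k)"
      by (simp add: field_simps)
    ultimately show ?thesis by (simp add: algebra_simps)
  qed
  have pos: "14 * (vnorm2 (x k))^2 + 1 > (0::real)" for k
    by (simp add: add_nonneg_pos)
  have ak2: "a k = s / (14 * (vnorm2 (x k))^2 + 1)" if "k \<in> N" for k
    using ak[OF that] pos[of k] by (simp add: field_simps)
  have s0: "s \<noteq> 0"
  proof
    assume "s = 0"
    then have "\<forall>i\<in>N. a i = 0" using ak2 by simp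
    moreover obtain v where "v \<in> S" "u v \<noteq> 0" using u1 by blast
    ultimately show False using b0 unfolding S_def a_def b_def by auto
  qed
  have "s = (\<Sum>i\<in>N. s / (14 * (vnorm2 (x i))^2 + 1))"
    unfolding s_def[of] by (rule sum.cong[OF refl]) (simp add: ak2 s_def)
  also have "\<dots> = s * (\<Sum>i\<in>N. 1 / (14 * (vnorm2 (x i))^2 + 1))"
    by (simp add: sum_distrib_left)
  finally show ?thesis using s0 by (simp add: N_def)
qed

lemma vnorm2_nonneg: "vnorm2 x \<ge> 0"
  by (simp add: vnorm2_def sum_nonneg qnorm2_nonneg)

lemma qnorm2_mult: "qnorm2 (p * q) = qnorm2 p * qnorm2 q"
  by (simp add: qnorm2_def power2_eq_square algebra_simps)

definition Kt :: "real \<Rightarrow> real \<Rightarrow> real" where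
  "Kt a b = -(2/63)*(a*b)^2 + a*b/252 + 1/441"

lemma Kf_off: "hmat_inner (outer x) (outer y) = vnorm2 x * vnorm2 y / 3 - 1/21 \<Longrightarrow>
   Kf x y = Kt (vnorm2 x) (vnorm2 y)"
proof -
  assume h: "hmat_inner (outer x) (outer y) = vnorm2 x * vnorm2 y / 3 - 1/21"
  show ?thesis unfolding Kf_def h Kt_def by (simp add: power2_eq_square algebra_simps)
qed

lemma Kf_diag: "Kf x x = Kt (vnorm2 x) (vnorm2 x) + (5/14 * (vnorm2 x)^4 - Kt (vnorm2 x) (vnorm2 x))"
  by (simp add: Kf_def hi_outer_self power2_eq_square algebra_simps eval_nat_numeral)

lemma double_sum_Kt:
  fixes c n :: "nat \<Rightarrow> real"
  shows "(\<Sum>i\<in>I. \<Sum>j\<in>I. c i * c j * Kt (n i) (n j)) =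
    -(2/63) * (\<Sum>i\<in>I. c i * n i ^2)^2 + (\<Sum>i\<in>I. c i * n i)^2 / 252 + (\<Sum>i\<in>I. c i)^2 / 441"
proof -
  have "(\<Sum>i\<in>I. \<Sum>j\<in>I. c i * c j * Kt (n i) (n j)) =
     (\<Sum>i\<in>I. \<Sum>j\<in>I. (-(2/63)) * ((c i * n i^2) * (c j * n j^2)) + (1/252) * ((c i * n i) * (c j * n j)) + (1/441) * (c i * c j))"
    by (intro sum.cong refl) (simp add: Kt_def power2_eq_square algebra_simps)
  also have "\<dots> = (-(2/63)) * (\<Sum>i\<in>I. \<Sum>j\<in>I. (c i * n i^2) * (c j * n j^2))
       + (1/252) * (\<Sum>i\<in>I. \<Sum>j\<in>I. (c i * n i) * (c j * n j)) + (1/441) * (\<Sum>i\<in>I. \<Sum>j\<in>I. c i * c j)"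
    by (simp only: sum.distrib flip: sum_distrib_left)
  also have "\<dots> = -(2/63) * (\<Sum>i\<in>I. c i * n i ^2)^2 + (\<Sum>i\<in>I. c i * n i)^2 / 252 + (\<Sum>i\<in>I. c i)^2 / 441"
    by (simp add: power2_eq_square sum_product)
  finally show ?thesis .
qed

lemma norms_one:
  fixes x :: "nat \<Rightarrow> quat^3"
  assumes gram: "\<And>i j. i < 15 \<Longrightarrow> j < 15 \<Longrightarrow> i \<noteq> j \<Longrightarrow>
                   hmat_inner (Gamma_mat (x i)) (Gamma_mat (x j)) = - 1 / 21"
  shows "\<forall>i<15. vnorm2 (x i) = 1"
proof -
  define N where "N = {..<15::nat}"
  define n where "n i = vnorm2 (x i)" for i
  define c where "c i = 21 / (14 * (n i)^2 + 1)" for i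
  have pos: "14 * (n i)^2 + 1 > 0" for i by (simp add: add_nonneg_pos)
  have n0: "n i \<ge> 0" for i by (simp add: n_def vnorm2_nonneg)
  have cn2: "c i * (n i)^2 = (21 - c i) / 14" for i
    using pos[of i] by (simp add: c_def field_simps)
  have csum: "(\<Sum>i\<in>N. c i) = 21"
  proof -
    have "(\<Sum>i\<in>N. c i) = 21 * (\<Sum>i<15. 1/(14 * (vnorm2 (x i))^2 + 1))"
      by (simp add: N_def c_def n_def sum_distrib_left)
    then show ?thesis using rank_sum[of x] gram by simp
  qed
  have A: "(\<Sum>i\<in>N. c i * n i ^2) = 21"
    by (simp add: cn2 sum_divide_distrib[symmetric] sum_subtractf csum) (simp add: N_def)
  have Goff: "hmat_inner (outer (x i)) (outer (x j)) = vnorm2 (x i) * vnorm2 (x j) / 3 - 1/21"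
    if "i \<in> N" "j \<in> N" "i \<noteq> j" for i j
    using gram[of i j] that hi_Gamma[of "x i" "x j"] hi_outer[of "x i" "x j"] by (simp add: N_def)
  define corr where "corr i = 5/14 * (n i)^4 - Kt (n i) (n i)" for i
  have Kfe: "Kf (x i) (x j) = Kt (n i) (n j) + (if i = j then corr i else 0)"
    if "i \<in> N" "j \<in> N" for i j
    using Kf_off[OF Goff] Kf_diag[of "x i"] that by (cases "i = j") (simp_all add: n_def corr_def)
  have ccorr: "c i * c i * corr i = 7/8 - 5/56 * c i" for i
  proof -
    have "c i * c i * corr i = (c i * (n i)^2)^2 * (5/14 + 2/63) - (c i * (n i)^2) * c i / 252 - c i * c i / 441"
      by (simp add: corr_def Kt_def power2_eq_square algebra_simps eval_nat_numeral)
    also have "\<dots> = 7/8 - 5/56 * c i"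
      unfolding cn2 by (simp add: power2_eq_square field_simps)
    finally show ?thesis .
  qed
  have "0 \<le> (\<Sum>i\<in>N. \<Sum>j\<in>N. c i * c j * Kf (x i) (x j))"
    by (rule psd) (simp add: N_def)
  also have "\<dots> = (\<Sum>i\<in>N. \<Sum>j\<in>N. c i * c j * Kt (n i) (n j)) + (\<Sum>i\<in>N. c i * c i * corr i)"
  proof -
    have "(\<Sum>i\<in>N. \<Sum>j\<in>N. c i * c j * Kf (x i) (x j)) =
        (\<Sum>i\<in>N. (\<Sum>j\<in>N. c i * c j * Kt (n i) (n j)) + c i * c i * corr i)"
    proof (rule sum.cong[OF refl])
      fix i assume i: "i \<in> N"
      have "(\<Sum>j\<in>N. c i * c j * Kf (x i) (x j)) = (\<Sum>j\<in>N. c i * c j * Kt (n i) (n j) + (if i = j then c i * c j * corr i else 0))"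
        by (rule sum.cong[OF refl]) (simp add: Kfe i algebra_simps)
      also have "\<dots> = (\<Sum>j\<in>N. c i * c j * Kt (n i) (n j)) + c i * c i * corr i"
        using i by (simp add: sum.distrib N_def)
      finally show "(\<Sum>j\<in>N. c i * c j * Kf (x i) (x j)) = (\<Sum>j\<in>N. c i * c j * Kt (n i) (n j)) + c i * c i * corr i" .
    qed
    then show ?thesis by (simp add: sum.distrib)
  qed
  also have "\<dots> = -(2/63) * 21^2 + (\<Sum>i\<in>N. c i * n i)^2 / 252 + 21^2 / 441 + (\<Sum>i\<in>N. 7/8 - 5/56 * c i)"
    by (simp add: double_sum_Kt A csum ccorr)
  also have "(\<Sum>i\<in>N. 7/8 - 5/56 * c i) = 45/4"
  proof -
    have "(\<Sum>i\<in>N. 7/8 - 5/56 * c i) = (\<Sum>i\<in>N. 7/8) - 5/56 * (\<Sum>i\<in>N. c i)"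
      by (simp only: sum_subtractf sum_distrib_left)
    then show ?thesis using csum by (simp add: N_def)
  qed
  finally have B2: "441 \<le> (\<Sum>i\<in>N. c i * n i)^2" by simp
  have Bnn: "0 \<le> (\<Sum>i\<in>N. c i * n i)"
    by (intro sum_nonneg mult_nonneg_nonneg) (auto simp: c_def n0 pos less_imp_le)
  have B: "21 \<le> (\<Sum>i\<in>N. c i * n i)"
  proof (rule ccontr)
    assume "\<not> ?thesis"
    then have "(\<Sum>i\<in>N. c i * n i)^2 < 21^2"
      using Bnn by (intro power_strict_mono) auto
    then show False using B2 by simp
  qed
  define psi where "psi i = 21/2 * (n i - 1)^2 / (14 * (n i)^2 + 1)" for i
  have psi0: "psi i \<ge> 0" for i using pos[of i] by (simp add: psi_def field_simps)
  have pe: "c i * n i - c i + 15/28 * (c i - 7/5) = - psi i" for i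
  proof -
    let ?D = "14 * (n i)^2 + 1"
    have cD: "c i * ?D = 21" using pos[of i] by (simp add: c_def field_simps)
    have pD: "psi i * ?D = 21/2 * (n i - 1)^2" using pos[of i] by (simp add: psi_def field_simps)
    have "(c i * n i - c i + 15/28 * (c i - 7/5)) * ?D = (n i - 13/28) * (c i * ?D) - 3/4 * ?D"
      by (simp add: field_simps)
    also have "\<dots> = - psi i * ?D" unfolding cD using pD by (simp add: power2_eq_square algebra_simps)
    finally have "(c i * n i - c i + 15/28 * (c i - 7/5)) * ?D = - psi i * ?D" .
    then show ?thesis using pos[of i] by (metis mult_cancel_right less_irrefl)
  qed
  have "(\<Sum>i\<in>N. c i * n i) - 21 = (\<Sum>i\<in>N. c i * n i - c i + 15/28 * (c i - 7/5))"
  proof -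
    have "(\<Sum>i\<in>N. c i * n i - c i + 15/28 * (c i - 7/5)) =
      (\<Sum>i\<in>N. c i * n i) - (\<Sum>i\<in>N. c i) + 15/28 * ((\<Sum>i\<in>N. c i) - (\<Sum>i\<in>N. 7/5))"
      by (simp only: sum.distrib sum_subtractf flip: sum_distrib_left)
    then show ?thesis using csum by (simp add: N_def)
  qed
  also have "\<dots> = - (\<Sum>i\<in>N. psi i)" by (simp only: pe sum_negf)
  finally have "(\<Sum>i\<in>N. psi i) \<le> 0" using B by linarith
  then have "(\<Sum>i\<in>N. psi i) = 0" using psi0 by (simp add: sum_nonneg order_antisym)
  then have "\<forall>i\<in>N. psi i = 0" using psi0 by (simp add: sum_nonneg_eq_0_iff N_def)
  then have "\<forall>i\<in>N. n i = 1"
  proof (intro ballI)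
    fix i assume "\<forall>i\<in>N. psi i = 0" "i \<in> N"
    then have "psi i = 0" by blast
    moreover have "28 * (n i)^2 + 2 > (0::real)" by (simp add: add_nonneg_pos)
    ultimately show "n i = 1" by (simp add: psi_def)
  qed
  then show ?thesis by (simp add: N_def n_def)
qed

theorem proposition4p11:
  fixes x :: "nat \<Rightarrow> quat^3"
  assumes gram: "\<And>i j. i < 15 \<Longrightarrow> j < 15 \<Longrightarrow> i \<noteq> j \<Longrightarrow>
                   hmat_inner (Gamma_mat (x i)) (Gamma_mat (x j)) = - 1 / 21"
    and norm4: "\<And>i. i < 15 \<Longrightarrow> (vnorm (x i)) ^ 4 \<in> {1 - 10 powi (-6) .. 1 + 10 powi (-6)}"
  shows "(\<forall>i<15. vnorm (x i) = 1) \<and> tight_simplex_HP2 15 x"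
proof -
  have n1: "\<forall>i<15. vnorm2 (x i) = 1" using norms_one[of x] gram by blast
  have v1: "\<forall>i<15. vnorm (x i) = 1" using n1 by (simp add: vnorm_def)
  have g: "qnorm2 (hinner (x i) (x j)) = 2/7" if "i < 15" "j < 15" "i \<noteq> j" for i j
    using gram[OF that] hi_Gamma[of "x i" "x j"] n1 that by simp
  have hl: "hline (x i) \<noteq> hline (x j)" if ij: "i < 15" "j < 15" "i \<noteq> j" for i j
  proof
    assume eq: "hline (x i) = hline (x j)"
    have "x i \<in> hline (x i)" unfolding hline_def
      by (rule CollectI, rule exI[of _ 1]) (simp add: vec_eq_iff)
    then have "x i \<in> hline (x j)" using eq by simp
    then obtain q where q: "x i = (\<chi> k. x j $ k * q)" unfolding hline_def by blast
    have "hinner (x j) (x i) = (\<Sum>k\<in>UNIV. (qcnj (x j $ k) * x j $ k) * q)"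
      unfolding hinner_def by (subst q) (simp add: mult.assoc)
    also have "\<dots> = qreal (vnorm2 (x j)) * q"
      by (simp add: mult_qcnj_self vnorm2_def qreal_sum sum_distrib_right del: quat_mult_comps)
    finally have h1: "hinner (x j) (x i) = q" using n1 ij by (simp add: qreal_def one_quat_def[symmetric])
    have "vnorm2 (x i) = (\<Sum>k\<in>UNIV. qnorm2 (x j $ k) * qnorm2 q)"
      unfolding vnorm2_def by (subst q) (simp add: qnorm2_mult)
    also have "\<dots> = vnorm2 (x j) * qnorm2 q" by (simp add: vnorm2_def sum_distrib_right)
    finally have "vnorm2 (x i) = qnorm2 q" using n1 ij by simp
    moreover have "qnorm2 q = 2/7" using g[of j i] ij h1 by simp
    ultimately show False using n1 ij by simp
  qed
  show ?thesis
    unfolding tight_simplex_HP2_def using v1 hl g by simp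
qed

end
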